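(* Let $n\ge1$, let $\mathbf{k}=(k_1,\dots,k_n)$ be positive integers and $N=n+|\mathbf{k}|$. The Filling Algorithm, $D\mapsto T(D)$, defines a bijection from $\mathcal{D}_{\mathbf{k}}$ onto $\mathcal{T}_{\mathbf{k}}$.
   Context: $|\mathbf{k}|=k_1+\cdots+k_n$. $\mathcal{D}_{\mathbf{k}}$ is the set of sequences $D=(a_1,\dots,a_N)$ whose positive entries are $k_1,\dots,k_n$ in this order, whose other $|\mathbf{k}|$ entries equal $-1$, and all of whose partial sums $a_1+\cdots+a_{i-1}$ are $\ge0$. Its SW-word $\texttt{SW}(D)=\sigma_1\cdots\sigma_N$ has $\sigma_i=S^{k_j}$ if $a_i=k_j$ and $\sigma_i=W$ if $a_i=-1$. $\mathcal{T}_{\mathbf{k}}$ is the set of arrays with $n$ columns, column $i$ consisting of $k_i+1$ cells in rows $1,\dots,k_i+1$, filled with the numbers $1,\dots,N$ each exactly once, such that entries increase from top to bottom in each column, increase from left to right along each row (among the cells present), and such that for every pair of entries $a<d$ with $d$ directly below $a$, no two entries $b,c$ with $a<b<c<d$ lie in the same column. Filling Algorithm (input $\texttt{SW}(D)$, output $T(D)$): place $1$ at the top of column $1$. Having placed $1,\dots,i-1$, call the bottom-most currently filled entry of column $j$ active if it is not in row $k_j+1$. If the $i$-th letter of $\texttt{SW}(D)$ is $W$, place $i$ immediately below the smallest active entry; otherwise place $i$ at the top of the first (leftmost) empty column. Continue until $1,\dots,N$ are placed. *)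

theory Defs
  imports Main
begin

text \<open>Conventions: the composition k = (k_1,...,k_n) is a list of naturals;
  columns and rows are 0-indexed internally (column j of the paper is index j-1).\<close>

definition Nval :: "nat list \<Rightarrow> nat" where
  "Nval k = length k + sum_list k"

definition D_set :: "nat list \<Rightarrow> int list set" where
  "D_set k = {D. length D = Nval k
      \<and> filter (\<lambda>a. a > 0) D = map int k
      \<and> (\<forall>a\<in>set D. a > 0 \<or> a = -1)
      \<and> (\<forall>i<length D. sum_list (take i D) \<ge> 0)}"

datatype letter = S nat | W

definition SW :: "int list \<Rightarrow> letter list" where
  "SW D = map (\<lambda>a. if a > 0 then S (nat a) else W) D"

text \<open>The set T_k: arrays given as lists of columns (top to bottom).\<close>
definition T_set :: "nat list \<Rightarrow> nat list list set" where
  "T_set k = {T. length T = length k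
      \<and> (\<forall>j<length k. length (T!j) = k!j + 1)
      \<and> distinct (concat T) \<and> set (concat T) = {1..Nval k}
      \<and> (\<forall>j<length k. sorted_wrt (<) (T!j))
      \<and> (\<forall>j j' r. j < j' \<and> j' < length k \<and> r < length (T!j) \<and> r < length (T!j')
            \<longrightarrow> T!j!r < T!j'!r)
      \<and> (\<forall>j r. j < length k \<and> Suc r < length (T!j) \<longrightarrow>
            \<not> (\<exists>j' r1 r2. j' < length k \<and> r1 < length (T!j') \<and> r2 < length (T!j')
                 \<and> T!j!r < T!j'!r1 \<and> T!j'!r1 < T!j'!r2 \<and> T!j'!r2 < T!j!(Suc r)))}"

definition active :: "nat list \<Rightarrow> nat list list \<Rightarrow> nat \<Rightarrow> bool" where
  "active k cols j \<longleftrightarrow> j < length k \<and> cols!j \<noteq> [] \<and> length (cols!j) < k!j + 1"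

fun fill_step :: "nat list \<Rightarrow> nat list list \<Rightarrow> nat \<times> letter \<Rightarrow> nat list list" where
  "fill_step k cols (i, W) =
     (if \<exists>j. active k cols j then
        (let j = (LEAST j. active k cols j \<and>
                    (\<forall>j'. active k cols j' \<longrightarrow> last (cols!j) \<le> last (cols!j')))
         in cols[j := cols!j @ [i]])
      else cols)"
| "fill_step k cols (i, S _) =
     (if \<exists>j<length k. cols!j = [] then
        (let j = (LEAST j. j < length k \<and> cols!j = []) in cols[j := [i]])
      else cols)"

definition fill :: "nat list \<Rightarrow> letter list \<Rightarrow> nat list list" where
  "fill k w = foldl (fill_step k) ((replicate (length k) [])[0 := [1]])
                 (zip [2..<length w + 1] (tl w))"

definition filling_map :: "nat list \<Rightarrow> int list \<Rightarrow> nat list list" where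
  "filling_map k D = fill k (SW D)"

end

theory Submission
  imports Defs
begin


lemma distinct_concat_nth:
  assumes "distinct (concat xs)" "i < length xs" "j < length xs"
    "a < length (xs!i)" "b < length (xs!j)" "xs!i!a = xs!j!b"
  shows "i = j \<and> a = b"
  using assms
proof (induction xs arbitrary: i j)
  case Nil then show ?case by simp
next
  case (Cons y ys)
  show ?case
  proof (cases i)
    case 0
    show ?thesis
    proof (cases j)
      case 0 then show ?thesis using Cons.prems \<open>i=0\<close> by (simp add: nth_eq_iff_index_eq)
    next
      case (Suc j')
      have "y!a \<in> set y" using Cons.prems(4) \<open>i=0\<close> by simp
      moreover have "ys!j'!b \<in> set (concat ys)" using Cons.prems(3,5) Suc by (auto intro!: bexI[of _ "ys!j'"])
      ultimately show ?thesis using Cons.prems \<open>i=0\<close> \<open>j = Suc j'\<close> by auto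
    qed
  next
    case (Suc i')
    show ?thesis
    proof (cases j)
      case 0
      have 1: "y!b \<in> set y" using Cons.prems(5) \<open>j=0\<close> by simp
      have 2: "ys!i'!a \<in> set (concat ys)" using Cons.prems(2,4) Suc by (auto intro!: bexI[of _ "ys!i'"])
      have 3: "ys!i'!a = y!b" using Cons.prems(6) \<open>j=0\<close> Suc by simp
      have "set y \<inter> set (concat ys) = {}" using Cons.prems(1) by simp
      with 1 2 3 show ?thesis by auto
    next
      case (Suc j')
      with Cons.IH[of i' j'] Cons.prems \<open>i = Suc i'\<close> show ?thesis by auto
    qed
  qed
qed

lemma in_concat_nth: "x \<in> set (concat xs) \<longleftrightarrow> (\<exists>j<length xs. \<exists>r<length (xs!j). xs!j!r = x)"
  apply (auto simp: in_set_conv_nth)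
   apply blast
  by (metis nth_mem)

definition upd :: "nat list list \<Rightarrow> nat \<Rightarrow> nat \<Rightarrow> nat list list" where
  "upd cols j i = cols[j := cols!j @ [i]]"

lemma upd_nth: "j < length cols \<Longrightarrow> r < length (upd cols j i ! j') \<Longrightarrow> upd cols j i ! j' ! r =
   (if j' = j then (if r < length (cols!j) then cols!j!r else i) else cols!j'!r)"
  by (auto simp: upd_def nth_append nth_list_update)

lemma upd_len[simp]: "length (upd cols j i) = length cols"
  by (simp add: upd_def)

lemma upd_len2: "j < length cols \<Longrightarrow> length (upd cols j i ! j') =
   (if j' = j then Suc (length (cols!j)) else length (cols!j'))"
  by (auto simp: upd_def)

lemma upd_nth_col: "j < length cols \<Longrightarrow> upd cols j i ! j' = (if j' = j then cols!j @ [i] else cols!j')"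
  by (auto simp: upd_def)

definition cap :: "nat list \<Rightarrow> nat list list \<Rightarrow> int" where
  "cap k cols = (\<Sum>j<length k. if cols!j = [] then 0 else int (k!j) + 1 - int (length (cols!j)))"

lemma cap_upd:
  assumes "j < length k" "length cols = length k"
  shows "cap k (upd cols j i) = cap k cols + (if cols!j = [] then int (k!j) else -1)"
proof -
  let ?f = "\<lambda>cs j. if cs!j = [] then 0 else int (k!j) + 1 - int (length (cs!j))"
  have "cap k (upd cols j i) = ?f (upd cols j i) j + (\<Sum>j'\<in>{..<length k} - {j}. ?f (upd cols j i) j')"
    unfolding cap_def using assms by (simp add: sum.remove)
  also have "(\<Sum>j'\<in>{..<length k} - {j}. ?f (upd cols j i) j') = (\<Sum>j'\<in>{..<length k} - {j}. ?f cols j')"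
    using assms by (intro sum.cong) (auto simp: upd_nth_col)
  also have "?f (upd cols j i) j = ?f cols j + (if cols!j = [] then int (k!j) else -1)"
    using assms by (auto simp: upd_nth_col)
  also have "cap k cols = ?f cols j + (\<Sum>j'\<in>{..<length k} - {j}. ?f cols j')"
    unfolding cap_def using assms by (simp add: sum.remove)
  ultimately show ?thesis by simp
qed

fun G :: "nat list \<Rightarrow> letter list \<Rightarrow> nat \<Rightarrow> nat list list" where
  "G k w 0 = (replicate (length k) [])[0 := [1]]"
| "G k w (Suc i) = fill_step k (G k w i) (i+2, w!(Suc i))"

lemma foldl_G:
  "i \<le> length w - 1 \<Longrightarrow> foldl (fill_step k) ((replicate (length k) [])[0 := [1]])
      (zip [2..<i+2] (take i (tl w))) = G k w i"
proof (induction i)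
  case 0 then show ?case by simp
next
  case (Suc i)
  have l: "length [2..<i+2] = length (take i (tl w))" using Suc.prems by (simp del: upt_Suc)
  have e1: "take (Suc i) (tl w) = take i (tl w) @ [tl w ! i]"
    using Suc.prems by (simp add: take_Suc_conv_app_nth)
  have e2: "[2..<Suc i + 2] = [2..<i+2] @ [i+2]" by (simp only: add_Suc upt_Suc_append[OF le_add2])
  have e3: "tl w ! i = w ! Suc i" using Suc.prems by (simp add: nth_tl)
  show ?case unfolding e1 e2 zip_append[OF l] foldl_append using Suc by (simp del: upt_Suc add: e3)
qed

lemma fill_G: "w \<noteq> [] \<Longrightarrow> fill k w = G k w (length w - 1)"
  using foldl_G[of "length w - 1" w k] by (simp add: fill_def)

lemma fs_W:
  assumes "active k cols j" "\<forall>j'. active k cols j' \<longrightarrow> last (cols!j) \<le> last (cols!j')"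
    and "\<And>j'. active k cols j' \<Longrightarrow> \<forall>j''. active k cols j'' \<longrightarrow> last (cols!j') \<le> last (cols!j'') \<Longrightarrow> j' = j"
  shows "fill_step k cols (i, W) = upd cols j i"
proof -
  have "(LEAST j. active k cols j \<and> (\<forall>j'. active k cols j' \<longrightarrow> last (cols!j) \<le> last (cols!j'))) = j"
  proof (rule Least_equality)
    show "active k cols j \<and> (\<forall>j'. active k cols j' \<longrightarrow> last (cols!j) \<le> last (cols!j'))"
      using assms(1,2) by blast
    show "\<And>y. active k cols y \<and> (\<forall>j'. active k cols j' \<longrightarrow> last (cols!y) \<le> last (cols!j')) \<Longrightarrow> j \<le> y"
      using assms(3) by fastforce
  qed
  moreover have ex: "\<exists>j. active k cols j" using assms(1) by blast
  ultimately show ?thesis by (simp only: fill_step.simps if_P[OF ex] if_True Let_def upd_def)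
qed

lemma fs_S:
  assumes "j < length k" "cols!j = []" "\<forall>j'<j. cols!j' \<noteq> []"
  shows "fill_step k cols (i, S x) = upd cols j i"
proof -
  have "(LEAST j. j < length k \<and> cols!j = []) = j"
  proof (rule Least_equality)
    show "j < length k \<and> cols ! j = []" using assms by simp
    show "\<And>y. y < length k \<and> cols ! y = [] \<Longrightarrow> j \<le> y" using assms(3) not_le by blast
  qed
  moreover have ex: "\<exists>j<length k. cols!j = []" using assms by blast
  ultimately show ?thesis using assms(2) by (simp only: fill_step.simps if_P[OF ex] if_True Let_def upd_def append_Nil)
qed

lemma ex_min_active:
  assumes "\<exists>j. active k cols j"
  shows "\<exists>j. active k cols j \<and> (\<forall>j'. active k cols j' \<longrightarrow> last (cols!j) \<le> last (cols!j'))"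
proof -
  let ?S = "{j. active k cols j}"
  have fin: "finite ?S" by (rule finite_subset[of _ "{..<length k}"]) (auto simp: active_def)
  let ?v = "Min ((\<lambda>j. last (cols!j)) ` ?S)"
  have "?v \<in> (\<lambda>j. last (cols!j)) ` ?S" using fin assms by (intro Min_in) auto
  then obtain j where "active k cols j" "last (cols!j) = ?v" by auto
  moreover have "\<forall>j'. active k cols j' \<longrightarrow> ?v \<le> last (cols!j')" using fin by auto
  ultimately show ?thesis by (intro exI[of _ j]) auto
qed



lemma upd_decomp: "j < length cols \<Longrightarrow> upd cols j x = take j cols @ (cols!j @ [x]) # drop (Suc j) cols"
  by (simp add: upd_def upd_conv_take_nth_drop)

lemma set_concat_upd: "j < length cols \<Longrightarrow> set (concat (upd cols j x)) = insert x (set (concat cols))"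
proof -
  assume j: "j < length cols"
  have e: "cols = take j cols @ cols!j # drop (Suc j) cols" using j by (simp add: id_take_nth_drop)
  show ?thesis unfolding upd_decomp[OF j] by (subst (2) e) auto
qed

lemma distinct_concat_upd:
  assumes "j < length cols" "distinct (concat cols)" "x \<notin> set (concat cols)"
  shows "distinct (concat (upd cols j x))"
proof -
  have e: "cols = take j cols @ cols!j # drop (Suc j) cols" using assms by (simp add: id_take_nth_drop)
  have "distinct (concat (take j cols @ cols!j # drop (Suc j) cols))" using assms(2) e by simp
  moreover have "x \<notin> set (concat (take j cols @ cols!j # drop (Suc j) cols))" using assms(3) e by simp
  ultimately show ?thesis unfolding upd_decomp[OF assms(1)] by (auto simp: distinct_append)
qed

lemma upd_cases:
  assumes "j < length cols" "r < length (upd cols j x ! j')"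
  shows "(j' = j \<and> r = length (cols!j) \<and> upd cols j x ! j' ! r = x) \<or>
         (r < length (cols!j') \<and> upd cols j x ! j' ! r = cols!j'!r \<and> \<not> (j' = j \<and> r = length (cols!j)))"
  using assms by (auto simp: upd_nth upd_len2 split: if_splits)

definition rowc :: "nat list list \<Rightarrow> bool" where
  "rowc cols \<longleftrightarrow> (\<forall>j j' r. j < j' \<and> j' < length cols \<and> r < length (cols!j) \<and> r < length (cols!j')
            \<longrightarrow> cols!j!r < cols!j'!r)"

definition patc :: "nat list list \<Rightarrow> bool" where
  "patc cols \<longleftrightarrow> (\<forall>j r. j < length cols \<and> Suc r < length (cols!j) \<longrightarrow>
            \<not> (\<exists>j' r1 r2. j' < length cols \<and> r1 < length (cols!j') \<and> r2 < length (cols!j')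
                 \<and> cols!j!r < cols!j'!r1 \<and> cols!j'!r1 < cols!j'!r2 \<and> cols!j'!r2 < cols!j!(Suc r)))"

definition Qc :: "nat list \<Rightarrow> nat list list \<Rightarrow> bool" where
  "Qc k cols \<longleftrightarrow> (\<forall>j' s j. j' < length cols \<and> Suc s < length (cols!j') \<and> active k cols j
       \<longrightarrow> cols!j'!s < last (cols!j))"

definition npos :: "int list \<Rightarrow> nat \<Rightarrow> nat" where
  "npos D m = length (filter (\<lambda>a. a > 0) (take m D))"

definition Inv :: "nat list \<Rightarrow> int list \<Rightarrow> nat \<Rightarrow> nat list list \<Rightarrow> bool" where
  "Inv k D m cols \<longleftrightarrow> length cols = length k \<and> distinct (concat cols) \<and> set (concat cols) = {1..m}
    \<and> (\<forall>j<length k. sorted_wrt (<) (cols!j)) \<and> (\<forall>j<length k. length (cols!j) \<le> k!j + 1)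
    \<and> rowc cols \<and> Qc k cols \<and> patc cols
    \<and> (\<forall>j<length k. cols!j \<noteq> [] \<longleftrightarrow> j < npos D m)
    \<and> (\<forall>j<length k. \<forall>r<length (cols!j). (D!(cols!j!r - 1) > 0 \<longleftrightarrow> r = 0))
    \<and> sum_list (take m D) = cap k cols"

lemma entry_range:
  assumes "set (concat cols) = {1..m}" "j < length cols" "r < length (cols!j)"
  shows "1 \<le> cols!j!r \<and> cols!j!r \<le> m"
proof -
  have "cols!j!r \<in> set (concat cols)" unfolding in_concat_nth using assms(2,3) by blast
  then show ?thesis using assms(1) by auto
qed

lemma filter_pos_nth:
  assumes "filter P D = ys" "m < length D" "P (D!m)"
  shows "length (filter P (take m D)) < length ys \<and> D!m = ys ! length (filter P (take m D))"
proof -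
  have "D = take m D @ D!m # drop (Suc m) D" using assms(2) by (simp add: id_take_nth_drop)
  then have "filter P D = filter P (take m D) @ D!m # filter P (drop (Suc m) D)"
    using assms(3) by (metis filter.simps(2) filter_append)
  then show ?thesis using assms(1) by (auto simp: nth_append)
qed

lemma sum_list_filter_split: "sum_list xs = sum_list (filter P xs) + sum_list (filter (\<lambda>x. \<not> P x) xs)"
  for xs :: "int list"
  by (induction xs) auto

lemma sum_list_int: "sum_list (map int k) = int (sum_list k)"
  by (induction k) auto

lemma D_sum_zero:
  assumes "D \<in> D_set k"
  shows "sum_list D = 0"
proof -
  have f: "filter (\<lambda>a. a > 0) D = map int k" and len: "length D = Nval k"
    and e: "\<forall>a\<in>set D. a > 0 \<or> a = -1" using assms by (auto simp: D_set_def)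
  have "filter (\<lambda>a. \<not> a > 0) D = replicate (length (filter (\<lambda>a. \<not> a > 0) D)) (-1)"
    using e by (auto simp: replicate_length_same[symmetric] intro!: replicate_eqI)
  moreover have "length (filter (\<lambda>a. \<not> a > 0) D) = sum_list k"
    using sum_length_filter_compl[of "\<lambda>a. a > 0" D] f len by (simp add: Nval_def)
  ultimately have "sum_list (filter (\<lambda>a. \<not> a > 0) D) = - int (sum_list k)"
    by (metis sum_list_replicate mult_minus1_right of_nat_id int_ops(7) mult.commute) 
  moreover have "sum_list (filter (\<lambda>a. a > 0) D) = int (sum_list k)" using f by (simp add: sum_list_int)
  ultimately show ?thesis using sum_list_filter_split[of D "\<lambda>a. a > 0"] by simp
qed

lemma same_sign_eq:
  assumes "length xs = length ys" "\<forall>i<length xs. (xs!i > 0 \<longleftrightarrow> ys!i > 0)"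
    "filter (\<lambda>a. a > 0) xs = filter (\<lambda>a. a > 0) ys"
    "\<forall>a\<in>set xs. a > 0 \<or> a = (-1::int)" "\<forall>a\<in>set ys. a > 0 \<or> a = -1"
  shows "xs = ys"
  using assms
proof (induction xs arbitrary: ys)
  case Nil then show ?case by simp
next
  case (Cons x xs)
  then obtain y ys' where y: "ys = y # ys'" by (cases ys) auto
  have s: "x > 0 \<longleftrightarrow> y > 0" using Cons.prems(2) y by (metis length_greater_0_conv list.discI nth_Cons_0)
  have "\<forall>i<length xs. (xs!i > 0 \<longleftrightarrow> ys'!i > 0)" using Cons.prems(1,2) y by force
  moreover have "filter (\<lambda>a. a > 0) xs = filter (\<lambda>a. a > 0) ys'" using Cons.prems(3) y s by (auto split: if_splits)
  ultimately have "xs = ys'" using Cons y by auto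
  moreover have "x = y" using Cons.prems(3,4,5) y s by (auto split: if_splits)
  ultimately show ?case using y by simp
qed



lemma Inv_S:
  assumes I: "Inv k D m cols" and c: "c = npos D m" "c < length k" "cols!c = []"
    and Dm: "D!m = int (k!c)" "D!m > 0" "k!c > 0" "m < length D"
  shows "Inv k D (Suc m) (upd cols c (Suc m))"
proof -
  let ?n = "length k"
  let ?C = "upd cols c (Suc m)"
  from I have len: "length cols = ?n" and dis: "distinct (concat cols)" and st: "set (concat cols) = {1..m}"
    and so: "\<forall>j<?n. sorted_wrt (<) (cols!j)" and lk: "\<forall>j<?n. length (cols!j) \<le> k!j + 1"
    and rw: "rowc cols" and Q: "Qc k cols" and pt: "patc cols"
    and ne: "\<forall>j<?n. cols!j \<noteq> [] \<longleftrightarrow> j < npos D m"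
    and sg: "\<forall>j<?n. \<forall>r<length (cols!j). (D!(cols!j!r - 1) > 0 \<longleftrightarrow> r = 0)"
    and sm: "sum_list (take m D) = cap k cols"
    unfolding Inv_def by auto
  have cl: "c < length cols" using c len by simp
  have rng: "\<And>j r. j < length cols \<Longrightarrow> r < length (cols!j) \<Longrightarrow> 1 \<le> cols!j!r \<and> cols!j!r \<le> m"
    using entry_range[OF st] by blast
  have Ccol: "\<And>j. ?C ! j = (if j = c then [Suc m] else cols!j)" using cl c(3) by (simp add: upd_nth_col)
  have npos': "npos D (Suc m) = Suc c"
    using c Dm by (simp add: npos_def take_Suc_conv_app_nth)
  have "length ?C = ?n" using len by simp
  moreover have "distinct (concat ?C)"
  proof -
    have "Suc m \<notin> set (concat cols)" using st by simp
    then show ?thesis using distinct_concat_upd[OF cl dis] by blast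
  qed
  moreover have "set (concat ?C) = {1..Suc m}"
    using set_concat_upd[OF cl] st by auto
  moreover have "\<forall>j<?n. sorted_wrt (<) (?C!j)" using so Ccol by simp
  moreover have "\<forall>j<?n. length (?C!j) \<le> k!j + 1" using lk Ccol by simp
  moreover have "rowc ?C"
    unfolding rowc_def
  proof (intro allI impI)
    fix j j' r assume h: "j < j' \<and> j' < length ?C \<and> r < length (?C!j) \<and> r < length (?C!j')"
    show "?C!j!r < ?C!j'!r"
    proof (cases "j' = c")
      case True
      then have "r = 0" using h Ccol by simp
      have "j < c" using h True by simp
      then have "cols!j \<noteq> []" using ne c h by simp
      then have "cols!j!r \<le> m" using rng[of j r] h \<open>r = 0\<close> len by simp
      then show ?thesis using True h \<open>j < c\<close> Ccol by simp
    next
      case False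
      have "j \<noteq> c"
      proof
        assume "j = c"
        then have "cols!j' = []" using ne c h len False by auto
        then show False using h False Ccol by simp
      qed
      then show ?thesis using rw h False Ccol unfolding rowc_def by simp
    qed
  qed
  moreover have "Qc k ?C"
    unfolding Qc_def
  proof (intro allI impI)
    fix j' s j assume h: "j' < length ?C \<and> Suc s < length (?C!j') \<and> active k ?C j"
    have "j' \<noteq> c" using h Ccol by auto
    show "?C!j'!s < last (?C!j)"
    proof (cases "j = c")
      case True
      have "?C!j'!s \<le> m" using rng[of j' s] h \<open>j' \<noteq> c\<close> Ccol by simp
      then show ?thesis using True Ccol by simp
    next
      case False
      have "active k cols j" using h False Ccol unfolding active_def by simp
      then show ?thesis using Q h False \<open>j' \<noteq> c\<close> Ccol unfolding Qc_def by simp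
    qed
  qed
  moreover have "patc ?C"
    unfolding patc_def
  proof (intro allI impI notI)
    fix j r assume h: "j < length ?C \<and> Suc r < length (?C!j)"
      and e: "\<exists>j' r1 r2. j' < length ?C \<and> r1 < length (?C!j') \<and> r2 < length (?C!j')
                 \<and> ?C!j!r < ?C!j'!r1 \<and> ?C!j'!r1 < ?C!j'!r2 \<and> ?C!j'!r2 < ?C!j!(Suc r)"
    then obtain j' r1 r2 where h2: "j' < length ?C \<and> r1 < length (?C!j') \<and> r2 < length (?C!j')
                 \<and> ?C!j!r < ?C!j'!r1 \<and> ?C!j'!r1 < ?C!j'!r2 \<and> ?C!j'!r2 < ?C!j!(Suc r)" by blast
    have "j \<noteq> c" using h Ccol by auto
    have "j' \<noteq> c" using h2 Ccol by auto
    have "j < length cols" "j' < length cols" using h h2 by simp_all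
    then show False using pt h h2 \<open>j \<noteq> c\<close> \<open>j' \<noteq> c\<close> Ccol unfolding patc_def by (auto simp del: upd_len)
  qed
  moreover have "\<forall>j<?n. ?C!j \<noteq> [] \<longleftrightarrow> j < npos D (Suc m)"
    using ne npos' Ccol c by auto
  moreover have "\<forall>j<?n. \<forall>r<length (?C!j). (D!(?C!j!r - 1) > 0 \<longleftrightarrow> r = 0)"
    using sg Ccol Dm by auto
  moreover have "sum_list (take (Suc m) D) = cap k ?C"
    using sm cap_upd[of c k cols "Suc m"] c len Dm by (simp add: take_Suc_conv_app_nth)
  ultimately show ?thesis unfolding Inv_def by blast
qed

lemma sorted_wrt_less_mono:
  assumes "sorted_wrt (<) xs" "i \<le> j" "j < length xs"
  shows "xs!i \<le> (xs!j :: nat)"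
proof (cases "i = j")
  case False
  then have "i < j" using assms(2) by simp
  then show ?thesis using assms(1,3) unfolding sorted_wrt_iff_nth_less by (simp add: less_imp_le)
qed simp

lemma sorted_wrt_less_rev:
  assumes "sorted_wrt (<) xs" "xs!i < (xs!j :: nat)" "i < length xs" "j < length xs"
  shows "i < j"
  using sorted_wrt_less_mono[OF assms(1), of j i] assms by (meson not_le order.strict_iff_not)

lemma Inv_W:
  assumes I: "Inv k D m cols" and act: "active k cols j"
    and mn: "\<forall>j'. active k cols j' \<longrightarrow> last (cols!j) \<le> last (cols!j')"
    and Dm: "D!m = -1" "m < length D"
  shows "Inv k D (Suc m) (upd cols j (Suc m))"
proof -
  let ?n = "length k"
  let ?C = "upd cols j (Suc m)"
  from I have len: "length cols = ?n" and dis: "distinct (concat cols)" and st: "set (concat cols) = {1..m}"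
    and so: "\<forall>j<?n. sorted_wrt (<) (cols!j)" and lk: "\<forall>j<?n. length (cols!j) \<le> k!j + 1"
    and rw: "rowc cols" and Q: "Qc k cols" and pt: "patc cols"
    and ne: "\<forall>j<?n. cols!j \<noteq> [] \<longleftrightarrow> j < npos D m"
    and sg: "\<forall>j<?n. \<forall>r<length (cols!j). (D!(cols!j!r - 1) > 0 \<longleftrightarrow> r = 0)"
    and sm: "sum_list (take m D) = cap k cols"
    unfolding Inv_def by auto
  have jl: "j < length cols" "j < ?n" and cj: "cols!j \<noteq> []" and jk: "length (cols!j) < k!j + 1"
    using act len unfolding active_def by auto
  define r0 where "r0 = length (cols!j)"
  have r0p: "r0 \<ge> 1" using cj r0_def by (cases "cols!j") auto
  define a where "a = last (cols!j)"
  have a_eq: "a = cols!j!(r0 - 1)" using cj by (simp add: a_def r0_def last_conv_nth)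
  have rng: "\<And>j r. j < length cols \<Longrightarrow> r < length (cols!j) \<Longrightarrow> 1 \<le> cols!j!r \<and> cols!j!r \<le> m"
    using entry_range[OF st] by blast
  have Ccol: "\<And>j'. ?C ! j' = (if j' = j then cols!j @ [Suc m] else cols!j')" using jl by (simp add: upd_nth_col)
  have lastlt: "\<And>j''. active k cols j'' \<Longrightarrow> j'' \<noteq> j \<Longrightarrow> a < last (cols!j'')"
  proof -
    fix j'' assume h: "active k cols j''" "j'' \<noteq> j"
    have "a \<le> last (cols!j'')" using mn h a_def by blast
    moreover have "a \<noteq> last (cols!j'')"
    proof
      assume e: "a = last (cols!j'')"
      have "cols!j'' \<noteq> []" "j'' < length cols" using h len unfolding active_def by auto
      then have "last (cols!j'') = cols!j''!(length (cols!j'') - 1)" by (simp add: last_conv_nth)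
      then have "cols!j!(r0 - 1) = cols!j''!(length (cols!j'') - 1)" using e a_eq by simp
      moreover have "r0 - 1 < length (cols!j)" using r0p r0_def by simp
      moreover have "length (cols!j'') - 1 < length (cols!j'')" using \<open>cols!j'' \<noteq> []\<close> by simp
      ultimately have "j = j''" using distinct_concat_nth[OF dis jl(1) \<open>j'' < length cols\<close>] by blast
      then show False using h by simp
    qed
    ultimately show "a < last (cols!j'')" by simp
  qed
  have Qa: "\<And>j' s. j' < length cols \<Longrightarrow> Suc s < length (cols!j') \<Longrightarrow> cols!j'!s < a"
    using Q act a_def unfolding Qc_def by blast
  have npos': "npos D (Suc m) = npos D m"
    using Dm by (simp add: npos_def take_Suc_conv_app_nth)
  have "length ?C = ?n" using len by simp
  moreover have "distinct (concat ?C)"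
  proof -
    have "Suc m \<notin> set (concat cols)" using st by simp
    then show ?thesis using distinct_concat_upd[OF jl(1) dis] by blast
  qed
  moreover have "set (concat ?C) = {1..Suc m}"
    using set_concat_upd[OF jl(1)] st by auto
  moreover have "\<forall>j'<?n. sorted_wrt (<) (?C!j')"
  proof (intro allI impI)
    fix j' assume "j' < ?n"
    show "sorted_wrt (<) (?C!j')"
    proof (cases "j' = j")
      case True
      have "\<forall>x\<in>set (cols!j). x < Suc m"
        using rng[OF jl(1)] by (fastforce simp: in_set_conv_nth)
      then show ?thesis using True Ccol so jl by (simp add: sorted_wrt_append)
    next
      case False then show ?thesis using Ccol so \<open>j' < ?n\<close> by simp
    qed
  qed
  moreover have "\<forall>j'<?n. length (?C!j') \<le> k!j' + 1" using lk Ccol jk by simp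
  moreover have "rowc ?C"
    unfolding rowc_def
  proof (intro allI impI)
    fix j1 j2 r assume h: "j1 < j2 \<and> j2 < length ?C \<and> r < length (?C!j1) \<and> r < length (?C!j2)"
    have l1: "j1 < length cols" "j2 < length cols" using h by auto
    show "?C!j1!r < ?C!j2!r"
    proof (cases "j2 = j \<and> r = r0")
      case True
      then have "j1 \<noteq> j" using h by simp
      then have "r < length (cols!j1)" "?C!j1!r = cols!j1!r" using h Ccol by auto
      moreover have "cols!j1!r \<le> m" using rng[OF l1(1)] \<open>r < length (cols!j1)\<close> by blast
      ultimately show ?thesis using True Ccol r0_def by (simp add: nth_append)
    next
      case False
      then have v2: "r < length (cols!j2)" "?C!j2!r = cols!j2!r"
        using upd_cases[OF jl(1), of r "Suc m" j2] h r0_def by auto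
      show ?thesis
      proof (cases "j1 = j \<and> r = r0")
        case True
        have "r0 - 1 < length (cols!j)" using r0p r0_def by simp
        moreover have "r0 - 1 < length (cols!j2)" using v2 True by simp
        ultimately have "cols!j!(r0-1) < cols!j2!(r0-1)" using rw h True l1 unfolding rowc_def by blast
        moreover have "cols!j2!(r0-1) < a" using Qa[OF l1(2), of "r0-1"] v2 True r0p by simp
        ultimately show ?thesis using a_eq by simp
      next
        case False
        then have v1: "r < length (cols!j1)" "?C!j1!r = cols!j1!r"
          using upd_cases[OF jl(1), of r "Suc m" j1] h r0_def by auto
        show ?thesis using rw h v1 v2 l1 unfolding rowc_def by simp
      qed
    qed
  qed
  moreover have "Qc k ?C"
    unfolding Qc_def
  proof (intro allI impI)
    fix j' s j'' assume h: "j' < length ?C \<and> Suc s < length (?C!j') \<and> active k ?C j''"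
    have l1: "j' < length cols" using h by simp
    have sl: "s < length (cols!j')" using h Ccol by (cases "j' = j") auto
    have vs: "?C!j'!s = cols!j'!s" using sl Ccol by (cases "j' = j") (simp_all add: nth_append)
    show "?C!j'!s < last (?C!j'')"
    proof (cases "j'' = j")
      case True
      then show ?thesis using vs rng[OF l1 sl] Ccol by simp
    next
      case False
      have actj'': "active k cols j''" using h False Ccol unfolding active_def by simp
      have lj'': "last (?C!j'') = last (cols!j'')" using False Ccol by simp
      show ?thesis
      proof (cases "j' = j \<and> s = r0 - 1")
        case True
        then have "?C!j'!s = a" using vs a_eq by simp
        then show ?thesis using lastlt[OF actj'' False] lj'' by simp
      next
        case False
        then have "Suc s < length (cols!j')" using h Ccol r0_def by (cases "j' = j") auto
        then show ?thesis using Q l1 actj'' vs lj'' unfolding Qc_def by simp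
      qed
    qed
  qed
  moreover have "patc ?C"
    unfolding patc_def
  proof (intro allI impI notI)
    fix j1 r assume h: "j1 < length ?C \<and> Suc r < length (?C!j1)"
      and e: "\<exists>j' r1 r2. j' < length ?C \<and> r1 < length (?C!j') \<and> r2 < length (?C!j')
                 \<and> ?C!j1!r < ?C!j'!r1 \<and> ?C!j'!r1 < ?C!j'!r2 \<and> ?C!j'!r2 < ?C!j1!(Suc r)"
    then obtain j2 r1 r2 where h2: "j2 < length ?C" "r1 < length (?C!j2)" "r2 < length (?C!j2)"
                 "?C!j1!r < ?C!j2!r1" "?C!j2!r1 < ?C!j2!r2" "?C!j2!r2 < ?C!j1!(Suc r)" by blast
    have l1: "j1 < length cols" "j2 < length cols" using h h2 by auto
    have rl: "r < length (cols!j1)" "?C!j1!r = cols!j1!r" using h Ccol by (cases "j1 = j"; simp add: nth_append)+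
    have top: "?C!j1!(Suc r) \<le> Suc m"
      using upd_cases[OF jl(1), of "Suc r" "Suc m" j1] h rng[OF l1(1), of "Suc r"] by auto
    have o2: "r2 < length (cols!j2)" "?C!j2!r2 = cols!j2!r2"
      using upd_cases[OF jl(1), of r2 "Suc m" j2] h2 top by auto
    have o1: "r1 < length (cols!j2)" "?C!j2!r1 = cols!j2!r1"
      using upd_cases[OF jl(1), of r1 "Suc m" j2] h2 top by auto
    show False
    proof (cases "j1 = j \<and> Suc r = r0")
      case True
      then have "r = r0 - 1" by linarith
      then have ra: "cols!j1!r = a" using a_eq True by simp
      have so2: "sorted_wrt (<) (cols!j2)" using so l1 len by simp
      have "r1 < r2" using sorted_wrt_less_rev[OF so2, of r1 r2] h2(5) o1 o2 by simp
      then have "cols!j2!r1 \<le> cols!j2!(r2 - 1)" using sorted_wrt_less_mono[OF so2, of r1 "r2 - 1"] o2 by simp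
      moreover have "cols!j2!(r2-1) < a" using Qa[OF l1(2), of "r2 - 1"] o2 \<open>r1 < r2\<close> by simp
      ultimately show False using h2(4) rl ra o1 by simp
    next
      case False
      then have "Suc r < length (cols!j1)" "?C!j1!(Suc r) = cols!j1!(Suc r)"
        using upd_cases[OF jl(1), of "Suc r" "Suc m" j1] h r0_def by auto
      then show False using pt l1 h2 o1 o2 rl unfolding patc_def by metis
    qed
  qed
  moreover have "\<forall>j'<?n. ?C!j' \<noteq> [] \<longleftrightarrow> j' < npos D (Suc m)"
    using ne npos' Ccol cj jl by auto
  moreover have "\<forall>j'<?n. \<forall>r<length (?C!j'). (D!(?C!j'!r - 1) > 0 \<longleftrightarrow> r = 0)"
  proof (intro allI impI)
    fix j' r assume h: "j' < ?n" "r < length (?C!j')"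
    show "(D!(?C!j'!r - 1) > 0 \<longleftrightarrow> r = 0)"
    proof (cases "j' = j \<and> r = r0")
      case True
      then show ?thesis using Dm Ccol r0p r0_def cj by simp
    next
      case False
      then have "r < length (cols!j')" "?C!j'!r = cols!j'!r"
        using upd_cases[OF jl(1), of r "Suc m" j'] h r0_def by auto
      then show ?thesis using sg h by simp
    qed
  qed
  moreover have "sum_list (take (Suc m) D) = cap k ?C"
    using sm cap_upd[of j k cols "Suc m"] jl len Dm cj by (simp add: take_Suc_conv_app_nth)
  ultimately show ?thesis unfolding Inv_def by blast
qed



lemma cap_active:
  assumes "length cols = length k" "\<forall>j<length k. length (cols!j) \<le> k!j + 1" "cap k cols > 0"
  shows "\<exists>j. active k cols j"
proof (rule ccontr)
  assume "\<not> (\<exists>j. active k cols j)"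
  then have "\<forall>j<length k. (if cols!j = [] then 0 else int (k!j) + 1 - int (length (cols!j))) = 0"
    using assms(2) unfolding active_def by (metis le_neq_implies_less of_nat_Suc diff_self add.commute Suc_eq_plus1)
  then have "cap k cols = 0" unfolding cap_def by simp
  then show False using assms(3) by simp
qed

lemma last_eq_col:
  assumes "distinct (concat cols)" "j < length cols" "j' < length cols" "cols!j \<noteq> []" "cols!j' \<noteq> []"
    "last (cols!j) = last (cols!j')"
  shows "j = j'"
proof -
  have "cols!j!(length (cols!j) - 1) = cols!j'!(length (cols!j') - 1)"
    using assms(4-6) by (simp add: last_conv_nth)
  moreover have "length (cols!j) - 1 < length (cols!j)" "length (cols!j') - 1 < length (cols!j')"
    using assms(4,5) by auto
  ultimately show ?thesis using distinct_concat_nth[OF assms(1-3), of "length (cols!j) - 1" "length (cols!j') - 1"]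
    by blast
qed

lemma D_partial_nonneg:
  assumes "D \<in> D_set k" "m < length D"
  shows "sum_list (take (Suc m) D) \<ge> 0"
proof (cases "Suc m < length D")
  case True then show ?thesis using assms by (auto simp: D_set_def)
next
  case False
  then have "take (Suc m) D = D" by simp
  then show ?thesis using D_sum_zero[OF assms(1)] by simp
qed

lemma Inv_step:
  assumes D: "D \<in> D_set k" and kp: "\<forall>x\<in>set k. x > 0" and I: "Inv k D m cols" and m: "m < length D"
  shows "Inv k D (Suc m) (fill_step k cols (Suc m, SW D ! m))"
proof -
  have f: "filter (\<lambda>a. a > 0) D = map int k" and e: "\<forall>a\<in>set D. a > 0 \<or> a = -1"
    using D by (auto simp: D_set_def)
  have len: "length cols = length k" and dis: "distinct (concat cols)"
    and lk: "\<forall>j<length k. length (cols!j) \<le> k!j + 1"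
    and ne: "\<forall>j<length k. cols!j \<noteq> [] \<longleftrightarrow> j < npos D m"
    and sm: "sum_list (take m D) = cap k cols" using I unfolding Inv_def by auto
  have ts: "sum_list (take (Suc m) D) = sum_list (take m D) + D!m"
    using m by (simp add: take_Suc_conv_app_nth)
  have sge: "sum_list (take (Suc m) D) \<ge> 0" using D_partial_nonneg[OF D m] .
  have "D!m \<in> set D" using m by simp
  then have Dm: "D!m > 0 \<or> D!m = -1" using e by blast
  then show ?thesis
  proof
    assume pos: "D!m > 0"
    have sw: "SW D ! m = S (nat (D!m))" using m pos by (simp add: SW_def)
    define c where "c = npos D m"
    have fc: "c < length k" "D!m = int (k!c)"
      using filter_pos_nth[OF f m, simplified, OF pos] c_def unfolding npos_def by auto
    have cc: "cols!c = []" using ne fc c_def by auto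
    have cb: "\<forall>j'<c. cols!j' \<noteq> []" using ne fc c_def by auto
    have kc: "k!c > 0" using kp fc by simp
    have "fill_step k cols (Suc m, SW D ! m) = upd cols c (Suc m)"
      unfolding sw by (rule fs_S[OF fc(1) cc cb])
    then show ?thesis using Inv_S[OF I c_def fc(1) cc fc(2) pos kc m] by simp
  next
    assume neg: "D!m = -1"
    have sw: "SW D ! m = W" using m neg by (simp add: SW_def)
    have "cap k cols > 0" using sm ts sge neg by simp
    then have "\<exists>j. active k cols j" using cap_active len lk by blast
    then obtain j where act: "active k cols j"
      and mn: "\<forall>j'. active k cols j' \<longrightarrow> last (cols!j) \<le> last (cols!j')"
      using ex_min_active by blast
    have uq: "j' = j" if "active k cols j'" "\<forall>j''. active k cols j'' \<longrightarrow> last (cols!j') \<le> last (cols!j'')" for j'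
    proof -
      have "last (cols!j') = last (cols!j)" using that act mn by (meson order_antisym)
      then show ?thesis using last_eq_col[OF dis, of j' j] that(1) act len unfolding active_def by auto
    qed
    have "fill_step k cols (Suc m, SW D ! m) = upd cols j (Suc m)"
      unfolding sw by (rule fs_W[OF act mn uq])
    then show ?thesis using Inv_W[OF I act mn neg m] by simp
  qed
qed

lemma Inv_0:
  assumes "D \<in> D_set k"
  shows "Inv k D 0 (replicate (length k) [])"
  unfolding Inv_def rowc_def patc_def Qc_def npos_def cap_def active_def by auto

lemma Nval_ge2:
  assumes "length k \<ge> 1" "\<forall>x\<in>set k. x > 0"
  shows "Nval k \<ge> 2"
proof -
  obtain x xs where k: "k = x # xs" using assms(1) by (cases k) auto
  then have "x > 0" using assms(2) by simp
  then show ?thesis using k by (simp add: Nval_def)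
qed

lemma Inv_G:
  assumes D: "D \<in> D_set k" and kp: "\<forall>x\<in>set k. x > 0" and n1: "length k \<ge> 1"
  shows "Suc i \<le> length D \<Longrightarrow> Inv k D (Suc i) (G k (SW D) i)"
proof (induction i)
  case 0
  have lD: "length D \<ge> 2" using D Nval_ge2[OF n1 kp] by (simp add: D_set_def)
  have "sum_list (take 1 D) \<ge> 0" using D lD by (auto simp: D_set_def)
  moreover have "take 1 D = [D!0]" using lD by (cases D) auto
  moreover have "D!0 \<in> set D" using lD by (intro nth_mem) linarith
  ultimately have pos: "D!0 > 0" using D by (force simp: D_set_def)
  have "0 < length D" using lD by linarith
  then have sw: "SW D ! 0 = S (nat (D!0))" using pos by (simp add: SW_def)
  have "fill_step k (replicate (length k) []) (Suc 0, SW D ! 0) = upd (replicate (length k) []) 0 (Suc 0)"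
    unfolding sw by (rule fs_S) (use n1 in \<open>auto simp: Suc_le_eq\<close>)
  also have "\<dots> = G k (SW D) 0" using n1 by (simp add: upd_def Suc_le_eq)
  finally show ?case using Inv_step[OF D kp Inv_0[OF D]] \<open>0 < length D\<close> by simp
next
  case (Suc i)
  have I: "Inv k D (Suc i) (G k (SW D) i)" using Suc by simp
  have "Suc i < length D" using Suc.prems by simp
  then show ?case using Inv_step[OF D kp I] by simp
qed

lemma Inv_fill:
  assumes D: "D \<in> D_set k" and kp: "\<forall>x\<in>set k. x > 0" and n1: "length k \<ge> 1"
  shows "Inv k D (Nval k) (filling_map k D)"
proof -
  have lD: "length D = Nval k" "length D \<ge> 2" using D Nval_ge2[OF n1 kp] by (auto simp: D_set_def)
  have "SW D \<noteq> []" using lD by (auto simp: SW_def)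
  then have "filling_map k D = G k (SW D) (length D - 1)"
    unfolding filling_map_def by (simp add: fill_G SW_def)
  then show ?thesis using Inv_G[OF D kp n1, of "length D - 1"] lD by simp
qed

lemma fill_in_T:
  assumes D: "D \<in> D_set k" and kp: "\<forall>x\<in>set k. x > 0" and n1: "length k \<ge> 1"
  shows "filling_map k D \<in> T_set k"
proof -
  define T where "T = filling_map k D"
  have I: "Inv k D (Nval k) T" using Inv_fill[OF D kp n1] T_def by simp
  have f: "filter (\<lambda>a. a > 0) D = map int k" and lD: "length D = Nval k" using D by (auto simp: D_set_def)
  have np: "npos D (Nval k) = length k" using f lD unfolding npos_def by simp
  from I have len: "length T = length k" and ne: "\<forall>j<length k. T!j \<noteq> []"
    and lk: "\<forall>j<length k. length (T!j) \<le> k!j + 1" and sm: "sum_list (take (Nval k) D) = cap k T"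
    unfolding Inv_def np by simp_all
  have "cap k T = 0" using sm D_sum_zero[OF D] lD by simp
  then have "(\<Sum>j<length k. int (k!j) + 1 - int (length (T!j))) = 0"
    unfolding cap_def using ne by simp
  moreover have "\<forall>j\<in>{..<length k}. int (k!j) + 1 - int (length (T!j)) \<ge> 0" using lk by auto
  ultimately have lz: "\<forall>j\<in>{..<length k}. int (k!j) + 1 - int (length (T!j)) = 0"
    by (subst (asm) sum_nonneg_eq_0_iff) auto
  then have lens: "\<forall>j<length k. length (T!j) = k!j + 1"
  proof (intro allI impI)
    fix j assume "j < length k"
    then have "int (k!j) + 1 - int (length (T!j)) = 0" using lz by blast
    then show "length (T!j) = k!j + 1" by arith
  qed
  have rc: "rowc T" and pc: "patc T" and ds: "distinct (concat T)" and st: "set (concat T) = {1..Nval k}"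
    and so: "\<forall>j<length k. sorted_wrt (<) (T!j)" using I unfolding Inv_def by simp_all
  have rc': "\<forall>j j' r. j < j' \<and> j' < length k \<and> r < length (T!j) \<and> r < length (T!j')
            \<longrightarrow> T!j!r < T!j'!r" using rc len unfolding rowc_def by simp
  have pc': "\<forall>j r. j < length k \<and> Suc r < length (T!j) \<longrightarrow>
            \<not> (\<exists>j' r1 r2. j' < length k \<and> r1 < length (T!j') \<and> r2 < length (T!j')
                 \<and> T!j!r < T!j'!r1 \<and> T!j'!r1 < T!j'!r2 \<and> T!j'!r2 < T!j!(Suc r))"
    using pc len unfolding patc_def by simp
  have "T \<in> T_set k" unfolding T_set_def mem_Collect_eq
    by (intro conjI len lens ds st so rc' pc')
  then show ?thesis using T_def by simp
qed

lemma fill_inj: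
  assumes kp: "\<forall>x\<in>set k. x > 0" and n1: "length k \<ge> 1"
  shows "inj_on (filling_map k) (D_set k)"
proof (rule inj_onI)
  fix D1 D2 assume D1: "D1 \<in> D_set k" and D2: "D2 \<in> D_set k" and eq: "filling_map k D1 = filling_map k D2"
  define T where "T = filling_map k D1"
  have I1: "Inv k D1 (Nval k) T" using Inv_fill[OF D1 kp n1] T_def by simp
  have I2: "Inv k D2 (Nval k) T" using Inv_fill[OF D2 kp n1] T_def eq by simp
  have l: "length D1 = Nval k" "length D2 = Nval k" using D1 D2 by (auto simp: D_set_def)
  have "\<forall>i<length D1. (D1!i > 0 \<longleftrightarrow> D2!i > 0)"
  proof (intro allI impI)
    fix i assume i: "i < length D1"
    have "Suc i \<in> set (concat T)" using I1 i l unfolding Inv_def by auto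
    then obtain j r where jr: "j < length T" "r < length (T!j)" "T!j!r = Suc i"
      unfolding in_concat_nth by blast
    have "length T = length k" using I1 unfolding Inv_def by simp
    then have jk: "j < length k" using jr by simp
    have s1: "\<forall>j<length k. \<forall>r<length (T!j). (D1!(T!j!r - 1) > 0 \<longleftrightarrow> r = 0)"
      using I1 unfolding Inv_def by simp
    have s2: "\<forall>j<length k. \<forall>r<length (T!j). (D2!(T!j!r - 1) > 0 \<longleftrightarrow> r = 0)"
      using I2 unfolding Inv_def by simp
    have "(D1!i > 0 \<longleftrightarrow> r = 0)" using s1 jk jr by force
    moreover have "(D2!i > 0 \<longleftrightarrow> r = 0)" using s2 jk jr by force
    ultimately show "(D1!i > 0 \<longleftrightarrow> D2!i > 0)" by simp
  qed
  then show "D1 = D2" using same_sign_eq[of D1 D2] D1 D2 l by (auto simp: D_set_def)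
qed



definition Pm :: "nat \<Rightarrow> nat list list \<Rightarrow> nat list list" where
  "Pm m T = map (filter (\<lambda>x. x \<le> m)) T"

definition istop :: "nat list list \<Rightarrow> nat \<Rightarrow> bool" where
  "istop T t \<longleftrightarrow> (\<exists>j<length T. T!j!0 = t)"

definition topidx :: "nat list list \<Rightarrow> nat \<Rightarrow> nat" where
  "topidx T t = (LEAST j. j < length T \<and> T!j!0 = t)"

definition DT :: "nat list \<Rightarrow> nat list list \<Rightarrow> int list" where
  "DT k T = map (\<lambda>t. if istop T t then int (k ! topidx T t) else -1) [1..<Nval k + 1]"

lemma filter_by_index:
  assumes "l \<le> length xs" "\<forall>i<length xs. P (xs!i) \<longleftrightarrow> i < l"
  shows "filter P xs = take l xs"
proof -
  have e: "xs = take l xs @ drop l xs" by simp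
  have "filter P (take l xs) = take l xs"
    using assms by (intro filter_True) (auto simp: in_set_conv_nth)
  moreover have "filter P (drop l xs) = []"
    using assms by (intro filter_False) (auto simp: in_set_conv_nth)
  ultimately show ?thesis by (subst e) (simp only: filter_append append_Nil2)
qed

lemma sorted_lt_iff:
  assumes "sorted_wrt (<) xs" "i < length xs" "j < length xs"
  shows "xs!i < (xs!j::nat) \<longleftrightarrow> i < j"
proof
  assume "xs!i < xs!j" then show "i < j" using sorted_wrt_less_rev[OF assms(1)] assms by blast
next
  assume "i < j" then show "xs!i < xs!j" using assms unfolding sorted_wrt_iff_nth_less by blast
qed

lemma filter_le_prefix:
  assumes "sorted_wrt (<) xs"
  shows "\<exists>l\<le>length xs. filter (\<lambda>x. x \<le> (m::nat)) xs = take l xs \<and> (\<forall>i<length xs. xs!i \<le> m \<longleftrightarrow> i < l)"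
proof -
  define l where "l = card {i. i < length xs \<and> xs!i \<le> m}"
  have "\<exists>l\<le>length xs. (\<forall>i<length xs. xs!i \<le> m \<longleftrightarrow> i < l)"
    using assms
  proof (induction xs)
    case Nil then show ?case by simp
  next
    case (Cons x xs)
    then obtain l where l: "l \<le> length xs" "\<forall>i<length xs. xs!i \<le> m \<longleftrightarrow> i < l" by auto
    show ?case
    proof (cases "x \<le> m")
      case True
      then show ?thesis using l by (intro exI[of _ "Suc l"]) (auto simp: nth_Cons split: nat.splits)
    next
      case False
      have "\<forall>i<length xs. xs!i > m"
      proof (intro allI impI)
        fix i assume "i < length xs"
        then have "x < xs!i" using Cons.prems by simp
        then show "xs!i > m" using False by simp
      qed
      then show ?thesis using False by (intro exI[of _ 0]) (auto simp: nth_Cons split: nat.splits)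
    qed
  qed
  then obtain l where "l \<le> length xs" "\<forall>i<length xs. xs!i \<le> m \<longleftrightarrow> i < l" by blast
  then show ?thesis using filter_by_index[of l xs "\<lambda>x. x \<le> m"] by blast
qed

lemma Pm_col:
  assumes "sorted_wrt (<) xs" "r < length xs" "xs!r = Suc m"
  shows "filter (\<lambda>x. x \<le> m) xs = take r xs" "filter (\<lambda>x. x \<le> Suc m) xs = take (Suc r) xs"
proof -
  have h1: "\<forall>i<length xs. xs!i \<le> m \<longleftrightarrow> i < r"
    using sorted_lt_iff[OF assms(1) _ assms(2)] assms(3) by (metis less_Suc_eq_le)
  show "filter (\<lambda>x. x \<le> m) xs = take r xs" by (rule filter_by_index) (use assms(2) h1 in auto)
  have h2: "\<forall>i<length xs. xs!i \<le> Suc m \<longleftrightarrow> i < Suc r"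
    using sorted_lt_iff[OF assms(1) assms(2)] assms(3) by (metis not_less less_Suc_eq_le)
  show "filter (\<lambda>x. x \<le> Suc m) xs = take (Suc r) xs" by (rule filter_by_index) (use assms(2) h2 in auto)
qed

lemma TD1: "T \<in> T_set k \<Longrightarrow> length T = length k"
  unfolding T_set_def mem_Collect_eq by (elim conjE) assumption

lemma TD2: "T \<in> T_set k \<Longrightarrow> \<forall>j<length k. length (T!j) = k!j + 1"
  unfolding T_set_def mem_Collect_eq by (elim conjE) assumption

lemma TD3: "T \<in> T_set k \<Longrightarrow> distinct (concat T)"
  unfolding T_set_def mem_Collect_eq by (elim conjE) assumption

lemma TD4: "T \<in> T_set k \<Longrightarrow> set (concat T) = {1..Nval k}"
  unfolding T_set_def mem_Collect_eq by (elim conjE) assumption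

lemma TD5: "T \<in> T_set k \<Longrightarrow> \<forall>j<length k. sorted_wrt (<) (T!j)"
  unfolding T_set_def mem_Collect_eq by (elim conjE) assumption

lemma TD6: "T \<in> T_set k \<Longrightarrow> \<forall>j j' r. j < j' \<and> j' < length k \<and> r < length (T!j) \<and> r < length (T!j')
            \<longrightarrow> T!j!r < T!j'!r"
  unfolding T_set_def mem_Collect_eq by (elim conjE) assumption

lemma TD7: "T \<in> T_set k \<Longrightarrow> \<forall>j r. j < length k \<and> Suc r < length (T!j) \<longrightarrow>
            \<not> (\<exists>j' r1 r2. j' < length k \<and> r1 < length (T!j') \<and> r2 < length (T!j')
                 \<and> T!j!r < T!j'!r1 \<and> T!j'!r1 < T!j'!r2 \<and> T!j'!r2 < T!j!(Suc r))"
  unfolding T_set_def mem_Collect_eq by (elim conjE) assumption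

lemmas TD = TD1 TD2 TD3 TD4 TD5 TD6 TD7

lemma T_locate:
  assumes "T \<in> T_set k" "1 \<le> t" "t \<le> Nval k"
  obtains j r where "j < length k" "r < length (T!j)" "T!j!r = t"
proof -
  have "t \<in> set (concat T)" using TD(4)[OF assms(1)] assms(2,3) by simp
  then show ?thesis using that TD(1)[OF assms(1)] unfolding in_concat_nth by auto
qed

lemma Pm_step:
  assumes T: "T \<in> T_set k" and j: "j < length k" "r < length (T!j)" "T!j!r = Suc m"
  shows "Pm (Suc m) T = upd (Pm m T) j (Suc m)" "Pm m T ! j = take r (T!j)"
proof -
  have len: "length T = length k" using TD(1)[OF T] .
  have so: "sorted_wrt (<) (T!j)" using TD(5)[OF T] j by simp
  have c1: "Pm m T ! j = take r (T!j)" using Pm_col(1)[OF so j(2,3)] j len by (simp add: Pm_def)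
  then show "Pm m T ! j = take r (T!j)" .
  have c2: "Pm (Suc m) T ! j = take (Suc r) (T!j)" using Pm_col(2)[OF so j(2,3)] j len by (simp add: Pm_def)
  have other: "Pm (Suc m) T ! j' = Pm m T ! j'" if "j' < length T" "j' \<noteq> j" for j'
  proof -
    have "Suc m \<notin> set (T!j')"
    proof
      assume "Suc m \<in> set (T!j')"
      then obtain r' where "r' < length (T!j')" "T!j'!r' = Suc m" by (auto simp: in_set_conv_nth)
      then show False using distinct_concat_nth[OF TD(3)[OF T], of j j' r r'] j len that by simp
    qed
    then have "filter (\<lambda>x. x \<le> Suc m) (T!j') = filter (\<lambda>x. x \<le> m) (T!j')"
      by (intro filter_cong) (auto simp: le_Suc_eq)
    then show ?thesis using that by (simp add: Pm_def)
  qed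
  have jl: "j < length (Pm m T)" using j len by (simp add: Pm_def)
  show "Pm (Suc m) T = upd (Pm m T) j (Suc m)"
  proof (rule nth_equalityI)
    show "length (Pm (Suc m) T) = length (upd (Pm m T) j (Suc m))" by (simp add: Pm_def)
    fix j' assume "j' < length (Pm (Suc m) T)"
    then have "j' < length T" by (simp add: Pm_def)
    show "Pm (Suc m) T ! j' = upd (Pm m T) j (Suc m) ! j'"
    proof (cases "j' = j")
      case True
      have "take (Suc r) (T!j) = take r (T!j) @ [Suc m]" using j by (simp add: take_Suc_conv_app_nth)
      then show ?thesis using True c1 c2 upd_nth_col[OF jl] by simp
    next
      case False
      then show ?thesis using other[OF \<open>j' < length T\<close> False] upd_nth_col[OF jl] by simp
    qed
  qed
qed



lemma T_entry:
  assumes T: "T \<in> T_set k" and "j < length k" "r < length (T!j)"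
  shows "1 \<le> T!j!r \<and> T!j!r \<le> Nval k"
  using entry_range[OF TD4[OF T]] assms TD1[OF T] by simp

lemma col_of_value:
  assumes T: "T \<in> T_set k" and j: "j < length k" "j' < length k" "r < length (T!j)"
    and v: "T!j!r \<in> set (T!j')"
  shows "j' = j"
proof -
  obtain r' where "r' < length (T!j')" "T!j'!r' = T!j!r" using v by (auto simp: in_set_conv_nth)
  then show ?thesis using distinct_concat_nth[OF TD3[OF T], of j j' r r'] j TD1[OF T] by simp
qed

lemma topidx_eq:
  assumes T: "T \<in> T_set k" and j: "j < length k"
  shows "topidx T (T!j!0) = j" "istop T (T!j!0)"
proof -
  have len: "length T = length k" using TD1[OF T] .
  show "topidx T (T!j!0) = j" unfolding topidx_def
  proof (rule Least_equality)
    show "j < length T \<and> T!j!0 = T!j!0" using j len by simp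
    fix y assume y: "y < length T \<and> T!y!0 = T!j!0"
    have "0 < length (T!y)" "0 < length (T!j)" using TD2[OF T] y j len by auto
    then have "y = j" using distinct_concat_nth[OF TD3[OF T], of y j 0 0] y j len by simp
    then show "j \<le> y" by simp
  qed
  show "istop T (T!j!0)" unfolding istop_def using j len by auto
qed

lemma istop_iff:
  assumes T: "T \<in> T_set k" and j: "j < length k" "r < length (T!j)"
  shows "istop T (T!j!r) \<longleftrightarrow> r = 0"
proof
  assume "istop T (T!j!r)"
  then obtain j' where j': "j' < length T" "T!j'!0 = T!j!r" unfolding istop_def by blast
  have "0 < length (T!j')" using TD2[OF T] j' TD1[OF T] by auto
  then show "r = 0" using distinct_concat_nth[OF TD3[OF T], of j' j 0 r] j' j TD1[OF T] by simp
next
  assume "r = 0" then show "istop T (T!j!r)" using topidx_eq(2)[OF T j(1)] by simp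
qed

lemma istop_pos:
  assumes T: "T \<in> T_set k" and kp: "\<forall>x\<in>set k. x > 0" and t: "istop T t"
  shows "k ! topidx T t > 0"
proof -
  obtain j where j: "j < length T" "T!j!0 = t" using t unfolding istop_def by blast
  then have "topidx T t = j" using topidx_eq(1)[OF T] TD1[OF T] by force
  then show ?thesis using kp j TD1[OF T] by simp
qed

lemma DT_len: "length (DT k T) = Nval k"
  by (simp add: DT_def)

lemma DT_nth: "m < Nval k \<Longrightarrow> DT k T ! m = (if istop T (Suc m) then int (k ! topidx T (Suc m)) else -1)"
  by (simp del: upt_Suc add: DT_def)

lemma DT_at:
  assumes T: "T \<in> T_set k" and j: "j < length k" "r < length (T!j)" "T!j!r = Suc m" and m: "m < Nval k"
  shows "DT k T ! m = (if r = 0 then int (k!j) else -1)"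
proof (cases "r = 0")
  case True
  then show ?thesis using DT_nth[OF m] topidx_eq[OF T j(1)] j by simp
next
  case False
  then show ?thesis using DT_nth[OF m] istop_iff[OF T j(1,2)] j by simp
qed

lemma Pm_len: "length (Pm m T) = length T"
  by (simp add: Pm_def)

lemma Pm_nth: "j < length T \<Longrightarrow> Pm m T ! j = filter (\<lambda>x. x \<le> m) (T!j)"
  by (simp add: Pm_def)

lemma last_take: "0 < r \<Longrightarrow> r \<le> length xs \<Longrightarrow> last (take r xs) = xs!(r-1)"
  by (subst last_conv_nth) (auto simp: min_def)

lemma sim_step:
  assumes T: "T \<in> T_set k" and kp: "\<forall>x\<in>set k. x > 0" and m: "m < Nval k"
  shows "fill_step k (Pm m T) (Suc m, SW (DT k T) ! m) = Pm (Suc m) T"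
proof -
  have len: "length T = length k" using TD1[OF T] .
  obtain j r where j: "j < length k" "r < length (T!j)" "T!j!r = Suc m"
    using T_locate[OF T, of "Suc m"] m by auto
  let ?P = "Pm m T"
  have PS: "Pm (Suc m) T = upd ?P j (Suc m)" and Pj: "?P ! j = take r (T!j)"
    using Pm_step[OF T j] by auto
  have mD: "m < length (DT k T)" using m DT_len by simp
  have lenT: "\<forall>j<length k. length (T!j) = k!j + 1" using TD2[OF T] .
  have so: "\<forall>j<length k. sorted_wrt (<) (T!j)" using TD5[OF T] .
  show ?thesis
  proof (cases "r = 0")
    case True
    have "DT k T ! m = int (k!j)" using DT_at[OF T j m] True by simp
    moreover have "k!j > 0" using kp j by simp
    ultimately have sw: "SW (DT k T) ! m = S (nat (int (k!j)))" using mD by (simp add: SW_def)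
    have e: "?P ! j = []" using Pj True by simp
    have b: "\<forall>j'<j. ?P ! j' \<noteq> []"
    proof (intro allI impI)
      fix j' assume "j' < j"
      then have "T!j'!0 < T!j!0" using TD6[OF T] j lenT by auto
      then have "T!j'!0 \<le> m" using j True by simp
      moreover have "T!j'!0 \<in> set (T!j')" using lenT \<open>j' < j\<close> j by auto
      ultimately show "?P ! j' \<noteq> []" using Pm_nth[of j' T m] \<open>j' < j\<close> j len
        by (auto simp: filter_empty_conv)
    qed
    show ?thesis unfolding sw PS by (rule fs_S[OF j(1) e b])
  next
    case False
    have "DT k T ! m = -1" using DT_at[OF T j m] False by simp
    then have sw: "SW (DT k T) ! m = W" using mD by (simp add: SW_def)
    have act: "active k ?P j" unfolding active_def using Pj False j lenT by auto
    have lastj: "last (?P ! j) = T!j!(r - 1)" using Pj False j last_take[of r "T!j"] by simp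
    have mn: "\<forall>j'. active k ?P j' \<longrightarrow> last (?P!j) \<le> last (?P!j')"
    proof (intro allI impI)
      fix j' assume a: "active k ?P j'"
      then have j': "j' < length k" "?P!j' \<noteq> []" "length (?P!j') < k!j' + 1"
        unfolding active_def by auto
      obtain l where l: "l \<le> length (T!j')" "filter (\<lambda>x. x \<le> m) (T!j') = take l (T!j')"
        "\<forall>i<length (T!j'). T!j'!i \<le> m \<longleftrightarrow> i < l"
        using filter_le_prefix[of "T!j'" m] so j' by auto
      have Pj': "?P!j' = take l (T!j')" using l Pm_nth[of j' T m] j' len by simp
      have ll: "0 < l" "l < length (T!j')" using Pj' j' l lenT by auto
      have lastj': "last (?P!j') = T!j'!(l - 1)" using Pj' ll last_take[of l "T!j'"] by simp
      have gt: "T!j'!l > m" using l(3) ll by auto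
      show "last (?P!j) \<le> last (?P!j')"
      proof (rule ccontr)
        assume "\<not> last (?P!j) \<le> last (?P!j')"
        then have lt: "T!j'!(l-1) < T!j!(r-1)" using lastj lastj' by simp
        show False
        proof (cases "j' = j")
          case True
          have "length (take r (T!j)) = length (take l (T!j))" using Pj Pj' True by simp
          then have "l = r" using j(2) ll(2) True by simp
          then show False using lt True by simp
        next
          case False
          have "T!j'!l \<noteq> Suc m"
          proof
            assume "T!j'!l = Suc m"
            then have "T!j!r \<in> set (T!j')" using j(3) ll by (metis nth_mem)
            then show False using col_of_value[OF T j(1) j'(1) j(2)] False by simp
          qed
          then have gt2: "T!j!r < T!j'!l" using gt j(3) by simp
          have "T!j!(r-1) < T!j!r" using sorted_lt_iff[of "T!j" "r-1" r] so j \<open>r \<noteq> 0\<close> by simp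
          have sl: "Suc (l-1) = l" using ll by simp
          have "Suc (l-1) < length (T!j')" using ll sl by simp
          then have np: "\<not> (\<exists>j2 r1 r2. j2 < length k \<and> r1 < length (T!j2) \<and> r2 < length (T!j2)
                 \<and> T!j'!(l-1) < T!j2!r1 \<and> T!j2!r1 < T!j2!r2 \<and> T!j2!r2 < T!j'!(Suc (l-1)))"
            using TD7[OF T] j'(1) by blast
          have "\<exists>j2 r1 r2. j2 < length k \<and> r1 < length (T!j2) \<and> r2 < length (T!j2)
                 \<and> T!j'!(l-1) < T!j2!r1 \<and> T!j2!r1 < T!j2!r2 \<and> T!j2!r2 < T!j'!(Suc (l-1))"
          proof (rule exI[of _ j], rule exI[of _ "r-1"], rule exI[of _ r], intro conjI)
            show "j < length k" "r - 1 < length (T!j)" "r < length (T!j)" using j by auto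
            show "T!j'!(l-1) < T!j!(r-1)" by (rule lt)
            show "T!j!(r-1) < T!j!r" by fact
            show "T!j!r < T!j'!(Suc (l-1))" using gt2 sl by simp
          qed
          then show False using np by blast
        qed
      qed
    qed
    have uq: "j'' = j" if a: "active k ?P j''" "\<forall>j'. active k ?P j' \<longrightarrow> last (?P!j'') \<le> last (?P!j')" for j''
    proof -
      have eq: "last (?P!j'') = last (?P!j)" using a act mn by (meson order_antisym)
      have j'': "j'' < length k" "?P!j'' \<noteq> []" using a unfolding active_def by auto
      have "last (?P!j'') \<in> set (?P!j'')" using j'' by simp
      then have "last (?P!j'') \<in> set (T!j'')" using Pm_nth[of j'' T m] j'' len by simp
      then have "T!j!(r-1) \<in> set (T!j'')" using eq lastj by simp
      then show ?thesis using col_of_value[OF T j(1) j''(1), of "r-1"] j by simp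
    qed
    show ?thesis unfolding sw PS by (rule fs_W[OF act mn uq])
  qed
qed



lemma Pm_0:
  assumes T: "T \<in> T_set k"
  shows "Pm 0 T = replicate (length k) []"
proof (rule nth_equalityI)
  show "length (Pm 0 T) = length (replicate (length k) [])" using TD1[OF T] by (simp add: Pm_def)
  fix j assume "j < length (Pm 0 T)"
  then have j: "j < length k" using TD1[OF T] by (simp add: Pm_def)
  have "\<forall>x\<in>set (T!j). \<not> x \<le> 0"
    using T_entry[OF T j] by (fastforce simp: in_set_conv_nth)
  then have "filter (\<lambda>x. x \<le> 0) (T!j) = []" by (simp add: filter_empty_conv)
  then show "Pm 0 T ! j = replicate (length k) [] ! j" using j TD1[OF T] by (simp add: Pm_def)
qed

lemma Pm_1:
  assumes T: "T \<in> T_set k" and n1: "length k \<ge> 1" and kp: "\<forall>x\<in>set k. x > 0"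
  shows "Pm 1 T = (replicate (length k) [])[0 := [1]]"
proof -
  obtain j r where j: "j < length k" "r < length (T!j)" "T!j!r = Suc 0"
    using T_locate[OF T, of 1] Nval_ge2[OF n1 kp] by auto
  have PS: "Pm (Suc 0) T = upd (Pm 0 T) j (Suc 0)" and P0: "Pm 0 T ! j = take r (T!j)"
    using Pm_step[OF T j] by auto
  have "r = 0" using P0 Pm_0[OF T] j by auto
  have "j = 0"
  proof (rule ccontr)
    assume "j \<noteq> 0"
    then have "0 < j" by simp
    have k0: "0 < length k" using j(1) by (cases k) auto
    then have l0: "0 < length (T!0)" "0 < length (T!j)" using TD2[OF T] j by auto
    then have "T!0!0 < T!j!0" using TD6[OF T] j \<open>0 < j\<close> by blast
    moreover have "1 \<le> T!0!0" using T_entry[OF T k0 l0(1)] by simp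
    ultimately show False using j \<open>r = 0\<close> by simp
  qed
  then show ?thesis using PS Pm_0[OF T] n1 by (simp add: upd_def Suc_le_eq)
qed

lemma Pm_N:
  assumes T: "T \<in> T_set k"
  shows "Pm (Nval k) T = T"
  unfolding Pm_def
proof (rule map_idI)
  fix xs assume "xs \<in> set T"
  then have "\<forall>x\<in>set xs. x \<le> Nval k" using TD4[OF T] by auto
  then show "filter (\<lambda>x. x \<le> Nval k) xs = xs" by simp
qed

lemma sim_G:
  assumes T: "T \<in> T_set k" and kp: "\<forall>x\<in>set k. x > 0" and n1: "length k \<ge> 1"
  shows "Suc i \<le> Nval k \<Longrightarrow> G k (SW (DT k T)) i = Pm (Suc i) T"
proof (induction i)
  case 0 then show ?case using Pm_1[OF T n1 kp] by simp
next
  case (Suc i)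
  then have "G k (SW (DT k T)) i = Pm (Suc i) T" by simp
  moreover have "Suc i < Nval k" using Suc.prems by simp
  ultimately show ?case using sim_step[OF T kp, of "Suc i"] by simp
qed

lemma fill_DT:
  assumes T: "T \<in> T_set k" and kp: "\<forall>x\<in>set k. x > 0" and n1: "length k \<ge> 1"
  shows "filling_map k (DT k T) = T"
proof -
  have N2: "Nval k \<ge> 2" using Nval_ge2[OF n1 kp] .
  have "SW (DT k T) \<noteq> []" using N2 DT_len[of k T] by (auto simp: SW_def)
  then have "filling_map k (DT k T) = G k (SW (DT k T)) (Nval k - 1)"
    unfolding filling_map_def by (simp add: fill_G SW_def DT_len)
  also have "\<dots> = Pm (Nval k) T" using sim_G[OF T kp n1, of "Nval k - 1"] N2 by simp
  finally show ?thesis using Pm_N[OF T] by simp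
qed

lemma cap_Pm_nonneg:
  assumes T: "T \<in> T_set k"
  shows "cap k (Pm m T) \<ge> 0"
  unfolding cap_def
proof (rule sum_nonneg)
  fix j assume "j \<in> {..<length k}"
  then have j: "j < length k" by simp
  have "length (Pm m T ! j) \<le> length (T!j)" using j TD1[OF T] by (simp add: Pm_def)
  then have "length (Pm m T ! j) \<le> k!j + 1" using TD2[OF T] j by simp
  then show "0 \<le> (if Pm m T ! j = [] then 0 else int (k!j) + 1 - int (length (Pm m T ! j)))" by simp
qed

lemma sum_DT:
  assumes T: "T \<in> T_set k"
  shows "m \<le> Nval k \<Longrightarrow> sum_list (take m (DT k T)) = cap k (Pm m T)"
proof (induction m)
  case 0
  show ?case using Pm_0[OF T] by (simp add: cap_def)
next
  case (Suc m)
  then have m: "m < Nval k" by simp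
  obtain j r where j: "j < length k" "r < length (T!j)" "T!j!r = Suc m"
    using T_locate[OF T, of "Suc m"] m by auto
  have PS: "Pm (Suc m) T = upd (Pm m T) j (Suc m)" and Pj: "Pm m T ! j = take r (T!j)"
    using Pm_step[OF T j] by auto
  have lP: "length (Pm m T) = length k" using TD1[OF T] by (simp add: Pm_def)
  have "sum_list (take (Suc m) (DT k T)) = sum_list (take m (DT k T)) + DT k T ! m"
    using m DT_len[of k T] by (simp add: take_Suc_conv_app_nth)
  also have "\<dots> = cap k (Pm m T) + (if r = 0 then int (k!j) else -1)"
    using Suc.IH m DT_at[OF T j m] by simp
  also have "\<dots> = cap k (Pm (Suc m) T)"
    using cap_upd[OF j(1) lP, of "Suc m"] PS Pj j(2) by auto
  finally show ?case .
qed

lemma DT_in_D: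
  assumes T: "T \<in> T_set k" and kp: "\<forall>x\<in>set k. x > 0" and n1: "length k \<ge> 1"
  shows "DT k T \<in> D_set k"
proof -
  let ?N = "Nval k"
  let ?f = "\<lambda>t. if istop T t then int (k ! topidx T t) else -1"
  have len: "length T = length k" using TD1[OF T] .
  have fpos: "?f t > 0 \<longleftrightarrow> istop T t" for t using istop_pos[OF T kp, of t] by auto
  have ent: "\<forall>a\<in>set (DT k T). a > 0 \<or> a = -1" unfolding DT_def using istop_pos[OF T kp] by auto
  have ps: "\<forall>i<length (DT k T). sum_list (take i (DT k T)) \<ge> 0"
  proof (intro allI impI)
    fix i assume "i < length (DT k T)"
    then have "i \<le> Nval k" using DT_len[of k T] by simp
    then show "sum_list (take i (DT k T)) \<ge> 0" using sum_DT[OF T] cap_Pm_nonneg[OF T] by simp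
  qed
  have tops: "filter (istop T) [1..<?N + 1] = map (\<lambda>j. T!j!0) [0..<length k]"
  proof (rule sorted_distinct_set_unique)
    have "sorted_wrt (<) (filter (istop T) [1..<?N + 1])" by (rule sorted_wrt_filter) (rule sorted_wrt_upt)
    then show "sorted (filter (istop T) [1..<?N + 1])" "distinct (filter (istop T) [1..<?N + 1])"
      by (simp_all add: strict_sorted_iff)
    have "sorted_wrt (<) (map (\<lambda>j. T!j!0) [0..<length k])"
      unfolding sorted_wrt_iff_nth_less using TD6[OF T] TD2[OF T] by auto
    then show "sorted (map (\<lambda>j. T!j!0) [0..<length k])" "distinct (map (\<lambda>j. T!j!0) [0..<length k])"
      by (simp_all add: strict_sorted_iff)
    show "set (filter (istop T) [1..<?N + 1]) = set (map (\<lambda>j. T!j!0) [0..<length k])"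
    proof
      show "set (filter (istop T) [1..<?N + 1]) \<subseteq> set (map (\<lambda>j. T!j!0) [0..<length k])"
        unfolding istop_def using len by auto
      show "set (map (\<lambda>j. T!j!0) [0..<length k]) \<subseteq> set (filter (istop T) [1..<?N + 1])"
      proof
        fix t assume "t \<in> set (map (\<lambda>j. T!j!0) [0..<length k])"
        then obtain j where j: "j < length k" "t = T!j!0" by auto
        have "0 < length (T!j)" using TD2[OF T] j by simp
        then have "1 \<le> t \<and> t \<le> ?N" using T_entry[OF T j(1)] j by simp
        moreover have "istop T t" using topidx_eq(2)[OF T j(1)] j by simp
        ultimately show "t \<in> set (filter (istop T) [1..<?N + 1])" by (simp del: upt_Suc)
      qed
    qed
  qed
  have fc: "filter ((\<lambda>a. a > 0) \<circ> ?f) [1..<?N + 1] = filter (istop T) [1..<?N + 1]"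
    by (rule filter_cong) (simp_all only: o_def fpos)
  have "filter (\<lambda>a. a > 0) (DT k T) = map ?f (filter (istop T) [1..<?N + 1])"
    unfolding DT_def filter_map fc ..
  also have "\<dots> = map (\<lambda>j. ?f (T!j!0)) [0..<length k]" using tops by simp
  also have "\<dots> = map (\<lambda>j. int (k!j)) [0..<length k]"
  proof (rule map_cong)
    fix j assume "j \<in> set [0..<length k]"
    then have j: "j < length k" by simp
    show "?f (T!j!0) = int (k!j)" using topidx_eq[OF T j] by simp
  qed simp
  also have "\<dots> = map int (map (\<lambda>i. k!i) [0..<length k])" by simp
  also have "\<dots> = map int k" by (simp only: map_nth)
  finally have fl: "filter (\<lambda>a. a > 0) (DT k T) = map int k" .
  show ?thesis unfolding D_set_def mem_Collect_eq by (intro conjI DT_len fl ent ps)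
qed

theorem mainTheorem2:
  fixes k :: "nat list"
  assumes "length k \<ge> 1" and "\<forall>x\<in>set k. x > 0"
  shows "bij_betw (filling_map k) (D_set k) (T_set k)"
proof (rule bij_betw_imageI)
  show "inj_on (filling_map k) (D_set k)" using fill_inj[OF assms(2,1)] .
  show "filling_map k ` D_set k = T_set k"
  proof
    show "filling_map k ` D_set k \<subseteq> T_set k" using fill_in_T[OF _ assms(2,1)] by blast
    show "T_set k \<subseteq> filling_map k ` D_set k"
    proof
      fix T assume T: "T \<in> T_set k"
      then have "filling_map k (DT k T) = T" using fill_DT[OF T assms(2,1)] by simp
      moreover have "DT k T \<in> D_set k" using DT_in_D[OF T assms(2,1)] .
      ultimately show "T \<in> filling_map k ` D_set k" by (metis image_eqI)
    qed
  qed
qed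


end
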